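(* For integers $k\ge 1$, $n\ge 0$ and $j\in\{-1,0,1\}$ let $$h_{n,k}(j)=\sum _{i=0}^n (-1)^{i-1+j} \binom{n}{i} F_{i-j} (k+1)^{n-i}.$$ Then for all integers $k,n\ge 1$ and $m\ge 1$ the following identities hold (writing $h_{t}(j)$ for $h_{t,k}(j)$): (1) $h_{n}(1) (h_{m}(1) h_{n}(1) - h_{m+n}(1)) + h_{n}(0)^2 h_{m}(-1)=h_{n}(0) (h_{m+n}(0) - 2 h_{m}(0) h_{n}(1))$; (2) $h_{m+n}(0) (h_{n}(1) + h_{n}(-1))= 2 h_{m}(0) (h_{n}(0)^2 + h_{n}(1) h_{n}(-1)) + h_{n}(0) (2 h_{m}(1) h_{n}(1) - h_{m+n}(1) + 2 h_{m}(-1) h_{n}(-1) - h_{m+n}(-1))$; (3) $h_{n}(0)^2 h_{m}(1) + h_{n}(-1) (h_{m}(-1) h_{n}(-1) - h_{m+n}(-1))= h_{n}(0) (h_{m+n}(0) - 2 h_{m}(0) h_{n}(-1))$; (4) $h_{n+1}(0)^2 + h_{n+1}(1)^2= h_{n}(0)^2 (1+(1+k)^2) + (1+k)^2 h_{n}(1)^2 + h_{n}(-1)^2 + 2(1+k) h_{n}(0)(h_{n}(1) + h_{n}(-1))$; (5) $h_{n}(1)^3 = h_{n}(0) h_{2n}(0) + h_{n}(1) h_{2n}(1) - h_{n}(0)^2 (2 h_{n}(1) + h_{n}(-1))$; (6) $2 h_{n}(0)^3= h_{2n}(0) (h_{n}(1) + h_{n}(-1)) + h_{n}(0) (-2 h_{n}(1)^2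 + h_{2n}(1) - 2 h_{n}(1) h_{n}(-1) - 2 h_{n}(-1)^2 + h_{2n}(-1))$; (7) $h_{n}(1)^2 h_{2n}(1)= h_{n}(0)^4 + h_{n}(1)^4 - h_{n}(0) h_{2n}(0) (h_{n}(1) + h_{n}(-1)) + h_{n}(0)^2 (3 h_{n}(1)^2- h_{2n}(1) + 2 h_{n}(1) h_{n}(-1) + h_{n}(-1)^2)$; (8) $2 h_{n}(0)^2 h_{2n}(0)= 4 h_{n}(0)^3 (h_{n}(1) + h_{n}(-1)) - h_{2n}(0) (h_{n}(1)^2 + h_{n}(-1)^2) + h_{n}(0) (h_{n}(1) + h_{n}(-1)) (2 h_{n}(1)^2 - h_{2n}(1) + 2 h_{n}(-1)^2 - h_{2n}(-1))$; (9) $h_{n}(1)^3 + h_{3n}(1) + h_{n}(0)^2 (2 h_{n}(1) + h_{n}(-1))=2 (h_{n}(0) h_{2n}(0) + h_{n}(1) h_{2n}(1))$; (10) $h_{2n}(0) (h_{n}(1) + h_{n}(-1))= h_{n}(0)^3 + h_{3n}(0) + h_{n}(0) (h_{n}(1)^2 - h_{2n}(1) + h_{n}(1) h_{n}(-1) + h_{n}(-1)^2 - h_{2n}(-1))$; (11) $h_{n}(1) ( 2 h_{n}(1) h_{2n}(1)-h_{n}(1)^3 - h_{3n}(1))= h_{n}(0)^4 + h_{n}(0)\big(h_{3n}(0) - h_{2n}(0) (3 h_{n}(1) + h_{n}(-1))\big) + h_{n}(0)^2 (3 h_{n}(1)^2 - h_{2n}(1) + 2 h_{n}(1) h_{n}(-1)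 + h_{n}(-1)^2 - h_{2n}(-1))$.
   Context: $F_k$ denotes the Fibonacci numbers, $F_0=0$, $F_1=1$, $F_k=F_{k-1}+F_{k-2}$, extended to negative indices by $F_{-k}=(-1)^{k+1}F_k$ (so $F_{-1}=1$, which is needed for the term $i=0$, $j=1$ in the definition of $h_{n,k}$). *)

theory Defs
  imports Main "HOL-Number_Theory.Fib"
begin

definition fibz :: "int \<Rightarrow> int" where
  "fibz t = (if t \<ge> 0 then int (fib (nat t))
             else (-1) ^ (nat (-t) + 1) * int (fib (nat (-t))))"

definition negone_pow :: "int \<Rightarrow> int" where
  "negone_pow e = (if even e then 1 else -1)"

definition h :: "int \<Rightarrow> nat \<Rightarrow> int \<Rightarrow> int" where
  "h k n j = (\<Sum>i=0..n. negone_pow (int i - 1 + j) * int (n choose i)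
                          * fibz (int i - j) * (k + 1) ^ (n - i))"

end

theory Submission
  imports Defs
begin

lemma fibz_rec: "fibz (t+2) = fibz (t+1) + fibz t"
proof -
  consider "t \<ge> 0" | "t = -1" | "t \<le> -2" by linarith
  then show ?thesis
  proof cases
    case 1
    then have "nat (t+2) = Suc (Suc (nat t))" "nat (t+1) = Suc (nat t)" by auto
    then show ?thesis using 1 by (simp add: fibz_def)
  next
    case 2 then show ?thesis by (simp add: fibz_def)
  next
    case 3
    define u where "u = nat (-t) - 2"
    have e: "nat (-t) = Suc (Suc u)" "nat (-(t+1)) = Suc u" "nat (-(t+2)) = u" using 3 by (auto simp: u_def)
    have "fibz t = (-1)^(u+3) * int (fib (Suc (Suc u)))" using 3 e unfolding fibz_def by (simp add: power_add)
    moreover have "fibz (t+1) = (-1)^(u+2) * int (fib (Suc u))" using 3 e by (simp add: fibz_def)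
    moreover have "fibz (t+2) = (if u = 0 then 0 else (-1)^(u+1) * int (fib u))"
      using 3 e by (auto simp: fibz_def)
    moreover have "(-1::int)^(u+3) = -((-1)^u)" "(-1::int)^(u+2) = (-1)^u" "(-1::int)^(u+1) = -((-1)^u)"
      by (simp_all add: power_add)
    ultimately show ?thesis by (cases "u = 0") (auto simp: algebra_simps)
  qed
qed

lemma negone_pow_m2: "negone_pow (e - 2) = negone_pow e"
  by (simp add: negone_pow_def)

lemma negone_pow_m1: "negone_pow (e - 1) = - negone_pow e"
  by (simp add: negone_pow_def)

lemma h_shift: "h k n (j-2) = h k n j - h k n (j-1)"
proof -
  have "\<And>i. negone_pow (int i - 1 + (j - 2)) * int (n choose i) * fibz (int i - (j - 2)) * (k + 1) ^ (n - i)
     = negone_pow (int i - 1 + j) * int (n choose i) * fibz (int i - j) * (k + 1) ^ (n - i)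
      - negone_pow (int i - 1 + (j-1)) * int (n choose i) * fibz (int i - (j-1)) * (k + 1) ^ (n - i)"
  proof -
    fix i
    have a: "negone_pow (int i - 1 + (j - 2)) = negone_pow (int i - 1 + j)"
      using negone_pow_m2[of "int i - 1 + j"] by (simp add: algebra_simps)
    have b: "negone_pow (int i - 1 + (j - 1)) = - negone_pow (int i - 1 + j)"
      using negone_pow_m1[of "int i - 1 + j"] by (simp add: algebra_simps)
    have c: "fibz (int i - (j - 2)) = fibz (int i - (j-1)) + fibz (int i - j)"
      using fibz_rec[of "int i - j"] by (simp add: algebra_simps)
    show "?thesis i" unfolding a b c by (simp add: algebra_simps)
  qed
  then show ?thesis unfolding h_def by (simp add: sum_subtractf)
qed

definition g :: "int \<Rightarrow> nat \<Rightarrow> int" where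
  "g j i = negone_pow (int i - 1 + j) * fibz (int i - j)"

lemma g_Suc: "g j (Suc i) = g (j-1) i"
proof -
  have "negone_pow (int (Suc i) - 1 + j) = negone_pow (int i - 1 + (j-1))"
    using negone_pow_m2[of "int i + j"] by (simp add: algebra_simps)
  then show ?thesis unfolding g_def by (simp add: algebra_simps)
qed

lemma h_g: "h k n j = (\<Sum>i=0..n. int (n choose i) * g j i * (k+1)^(n-i))"
  unfolding h_def g_def by (simp add: algebra_simps)

lemma h_suc: "h k (Suc n) j = (k+1) * h k n j + h k n (j-1)"
proof -
  define c where "c = k+1"
  have A: "g j 0 * c^(Suc n) + (\<Sum>i=0..n. int (n choose Suc i) * g j (Suc i) * c^(n-i)) = c * h k n j"
  proof -
    have "c * h k n j = (\<Sum>i=0..n. int (n choose i) * g j i * c^(Suc n-i))"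
      by (simp add: h_g c_def sum_distrib_left algebra_simps Suc_diff_le)
    also have "\<dots> = (\<Sum>i=0..Suc n. int (n choose i) * g j i * c^(Suc n-i))"
      by simp
    also have "\<dots> = g j 0 * c^(Suc n) + (\<Sum>i=0..n. int (n choose Suc i) * g j (Suc i) * c^(n-i))"
      by (subst sum.atLeast0_atMost_Suc_shift) simp
    finally show ?thesis by simp
  qed
  have B: "(\<Sum>i=0..n. int (n choose i) * g (j-1) i * c^(n-i)) = h k n (j-1)"
    by (simp add: h_g c_def)
  have "h k (Suc n) j = (\<Sum>i=0..Suc n. int (Suc n choose i) * g j i * c^(Suc n-i))"
    by (simp add: h_g c_def)
  also have "\<dots> = g j 0 * c^(Suc n) + (\<Sum>i=0..n. int (Suc n choose Suc i) * g j (Suc i) * c^(n-i))"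
    by (subst sum.atLeast0_atMost_Suc_shift) simp
  also have "\<dots> = g j 0 * c^(Suc n) + (\<Sum>i=0..n. int (n choose i) * g (j-1) i * c^(n-i))
       + (\<Sum>i=0..n. int (n choose Suc i) * g j (Suc i) * c^(n-i))"
    by (simp add: g_Suc algebra_simps sum.distrib)
  finally show ?thesis using A B by (simp add: c_def)
qed

definition yy where "yy k n = h k n 0"
definition zz where "zz k n = h k n (-1)"

lemma x_eq: "h k n 1 = yy k n + zz k n"
  using h_shift[of k n 1] by (simp add: yy_def zz_def)

lemma yy_suc: "yy k (Suc n) = (k+1) * yy k n + zz k n"
  using h_suc[of k n 0] by (simp add: yy_def zz_def)

lemma zz_suc: "zz k (Suc n) = k * zz k n + yy k n"
  using h_suc[of k n "-1"] h_shift[of k n 0] by (simp add: yy_def zz_def algebra_simps)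

lemma yy0: "yy k 0 = 0" by (simp add: yy_def h_def fibz_def)
lemma zz0: "zz k 0 = 1" by (simp add: zz_def h_def fibz_def negone_pow_def)

lemma add_formula0:
  "yy k (m+n) = yy k m * zz k n + zz k m * yy k n + yy k m * yy k n \<and>
   zz k (m+n) = zz k m * zz k n + yy k m * yy k n"
proof (induction m)
  case 0 then show ?case by (simp add: yy0 zz0)
next
  case (Suc m)
  then show ?case by (simp add: yy_suc zz_suc algebra_simps)
qed

lemma add_y: "yy k (m+n) = yy k m * zz k n + zz k m * yy k n + yy k m * yy k n"
  using add_formula0 by blast
lemma add_z: "zz k (m+n) = zz k m * zz k n + yy k m * yy k n"
  using add_formula0 by blast

theorem proposition7p4:
  fixes k :: int and n m :: nat
  assumes "k \<ge> 1" and "n \<ge> 1" and "m \<ge> 1"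
  defines "H \<equiv> h k"
  shows
   "(H n 1 * (H m 1 * H n 1 - H (m+n) 1) + (H n 0)^2 * H m (-1)
      = H n 0 * (H (m+n) 0 - 2 * H m 0 * H n 1)) \<and>
    (H (m+n) 0 * (H n 1 + H n (-1))
      = 2 * H m 0 * ((H n 0)^2 + H n 1 * H n (-1))
        + H n 0 * (2 * H m 1 * H n 1 - H (m+n) 1 + 2 * H m (-1) * H n (-1) - H (m+n) (-1))) \<and>
    ((H n 0)^2 * H m 1 + H n (-1) * (H m (-1) * H n (-1) - H (m+n) (-1))
      = H n 0 * (H (m+n) 0 - 2 * H m 0 * H n (-1))) \<and>
    ((H (n+1) 0)^2 + (H (n+1) 1)^2
      = (H n 0)^2 * (1 + (1+k)^2) + (1+k)^2 * (H n 1)^2 + (H n (-1))^2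
        + 2 * (1+k) * H n 0 * (H n 1 + H n (-1))) \<and>
    ((H n 1)^3 = H n 0 * H (2*n) 0 + H n 1 * H (2*n) 1 - (H n 0)^2 * (2 * H n 1 + H n (-1))) \<and>
    (2 * (H n 0)^3
      = H (2*n) 0 * (H n 1 + H n (-1))
        + H n 0 * (- 2 * (H n 1)^2 + H (2*n) 1 - 2 * H n 1 * H n (-1) - 2 * (H n (-1))^2 + H (2*n) (-1))) \<and>
    ((H n 1)^2 * H (2*n) 1
      = (H n 0)^4 + (H n 1)^4 - H n 0 * H (2*n) 0 * (H n 1 + H n (-1))
        + (H n 0)^2 * (3 * (H n 1)^2 - H (2*n) 1 + 2 * H n 1 * H n (-1) + (H n (-1))^2)) \<and>
    (2 * (H n 0)^2 * H (2*n) 0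
      = 4 * (H n 0)^3 * (H n 1 + H n (-1)) - H (2*n) 0 * ((H n 1)^2 + (H n (-1))^2)
        + H n 0 * (H n 1 + H n (-1)) * (2 * (H n 1)^2 - H (2*n) 1 + 2 * (H n (-1))^2 - H (2*n) (-1))) \<and>
    ((H n 1)^3 + H (3*n) 1 + (H n 0)^2 * (2 * H n 1 + H n (-1))
      = 2 * (H n 0 * H (2*n) 0 + H n 1 * H (2*n) 1)) \<and>
    (H (2*n) 0 * (H n 1 + H n (-1))
      = (H n 0)^3 + H (3*n) 0
        + H n 0 * ((H n 1)^2 - H (2*n) 1 + H n 1 * H n (-1) + (H n (-1))^2 - H (2*n) (-1))) \<and>
    (H n 1 * (2 * H n 1 * H (2*n) 1 - (H n 1)^3 - H (3*n) 1)
      = (H n 0)^4 + H n 0 * (H (3*n) 0 - H (2*n) 0 * (3 * H n 1 + H n (-1)))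
        + (H n 0)^2 * (3 * (H n 1)^2 - H (2*n) 1 + 2 * H n 1 * H n (-1) + (H n (-1))^2 - H (2*n) (-1)))"
proof -
  have hx: "\<And>t. H t 1 = yy k t + zz k t" by (simp add: H_def x_eq)
  have h0: "\<And>t. H t 0 = yy k t" by (simp add: H_def yy_def)
  have hm: "\<And>t. H t (-1) = zz k t" by (simp add: H_def zz_def)
  have e2: "2*n = n+n" "3*n = (n+n)+n" by auto
  show ?thesis
    unfolding hx h0 hm e2 Suc_eq_plus1[symmetric] yy_suc zz_suc
    by (simp only: add_y add_z) (simp add: algebra_simps power2_eq_square power3_eq_cube power4_eq_xxxx)
qed

end
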